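(* Let $V$ be a real Hilbert space, $\mathcal D$ a dictionary, $V_n\subset V$ a subspace of dimension $n$ with orthonormal basis $(\phi_1,\dots,\phi_n)$, and $\kappa\in(0,1)$. Let $(W_m)_{m\ge0}$ be generated by the collective OMP algorithm with parameter $\kappa$. If $J(V_n)<\infty$, then $$r_m\le\frac{J(V_n)^2}{\kappa^2}(m+1)^{-1}\qquad\text{for all } m\ge0.$$
   Context: A dictionary is a set $\mathcal D\subset V$ of elements with $\|\omega\|=1$ for all $\omega\in\mathcal D$ whose finite linear combinations are dense in $V$. Collective OMP: $W_0=\{0\}$; for $k\ge1$, choose $\omega_k\in\mathcal D$ with $$\sum_{i=1}^n|\langle\phi_i-P_{W_{k-1}}\phi_i,\omega_k\rangle|^2\ge\kappa^2\sup_{\omega\in\mathcal D}\sum_{i=1}^n|\langle\phi_i-P_{W_{k-1}}\phi_i,\omega\rangle|^2,$$ and set $W_k=\operatorname{span}\{\omega_1,\dots,\omega_k\}$ ($P_X$ is the orthogonal projection onto $X$). The residual is $r_m=\sum_{i=1}^n\|\phi_i-P_{W_m}\phi_i\|^2$. For $\Psi=(\psi_1,\dots,\psi_n)\in V^n$, $\|\Psi\|_{\ell^1(\mathcal D)}=\inf\{\sum_{\omega\in\mathcal D}\|c_\omega\|_2:\psi_i=\sum_{\omega\in\mathcal D}c_{\omega,i}\,\omega,\ i=1,\dots,n\}$ with $c_\omega\in\mathbb R^n$ (countably many nonzero; infimum of the empty set is $+\infty$), and $J(V_n)=\|(\phi_1,\dots,\phi_n)\|_{\ell^1(\mathcal D)}$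 for an orthonormal basis of $V_n$ (independent of the choice of basis). *)

theory Defs
  imports "HOL-Analysis.Analysis"
begin

definition dictionary :: "'a::real_normed_vector set \<Rightarrow> bool" where
  "dictionary D \<longleftrightarrow> (\<forall>\<omega>\<in>D. norm \<omega> = 1) \<and> closure (span D) = UNIV"

text \<open>Orthogonal projection onto a (finite-dimensional, hence closed) subspace X:
  the unique y in X with x - y orthogonal to X.\<close>
definition proj_onto :: "'a::real_inner set \<Rightarrow> 'a \<Rightarrow> 'a" where
  "proj_onto X x = (THE y. y \<in> X \<and> (\<forall>w\<in>X. inner (x - y) w = 0))"

definition omp_space :: "(nat \<Rightarrow> 'a::real_vector) \<Rightarrow> nat \<Rightarrow> 'a set" where
  "omp_space \<omega> k = span (\<omega> ` {1..k})"

definition collective_omp ::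
  "'a::real_inner set \<Rightarrow> real \<Rightarrow> nat \<Rightarrow> (nat \<Rightarrow> 'a) \<Rightarrow> (nat \<Rightarrow> 'a) \<Rightarrow> bool" where
  "collective_omp D \<kappa> n \<phi> \<omega> \<longleftrightarrow>
     (\<forall>k\<ge>1. \<omega> k \<in> D \<and>
        (\<Sum>i<n. (inner (\<phi> i - proj_onto (omp_space \<omega> (k - 1)) (\<phi> i)) (\<omega> k))\<^sup>2)
        \<ge> \<kappa>\<^sup>2 * (SUP v\<in>D. (\<Sum>i<n. (inner (\<phi> i - proj_onto (omp_space \<omega> (k - 1)) (\<phi> i)) v)\<^sup>2)))"

definition omp_residual :: "(nat \<Rightarrow> 'a::real_inner) \<Rightarrow> nat \<Rightarrow> (nat \<Rightarrow> 'a) \<Rightarrow> nat \<Rightarrow> real" where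
  "omp_residual \<phi> n \<omega> m = (\<Sum>i<n. (norm (\<phi> i - proj_onto (omp_space \<omega> m) (\<phi> i)))\<^sup>2)"

text \<open>Valid coefficient families c (c w i is the i-th coordinate of c_w in R^n) representing
  psi 0, ..., psi (n-1): countably many nonzero, and psi i = sum over w in D of c w i *R w.\<close>
definition l1_rep :: "'a::real_normed_vector set \<Rightarrow> nat \<Rightarrow> (nat \<Rightarrow> 'a) \<Rightarrow> ('a \<Rightarrow> nat \<Rightarrow> real) \<Rightarrow> bool" where
  "l1_rep D n \<psi> c \<longleftrightarrow> countable {w\<in>D. \<exists>i<n. c w i \<noteq> 0} \<and>
     (\<forall>i<n. ((\<lambda>w. c w i *\<^sub>R w) has_sum \<psi> i) D)"

definition l1_cost :: "'a set \<Rightarrow> nat \<Rightarrow> ('a \<Rightarrow> nat \<Rightarrow> real) \<Rightarrow> ereal" where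
  "l1_cost D n c = (SUP F\<in>{F. finite F \<and> F \<subseteq> D}. ereal (\<Sum>w\<in>F. sqrt (\<Sum>i<n. (c w i)\<^sup>2)))"

text \<open>The l1(D) norm of (psi 0, ..., psi (n-1)); infimum of empty set is +infinity.\<close>
definition l1_dict_norm :: "'a::real_normed_vector set \<Rightarrow> nat \<Rightarrow> (nat \<Rightarrow> 'a) \<Rightarrow> ereal" where
  "l1_dict_norm D n \<psi> = (INF c\<in>{c. l1_rep D n \<psi> c}. l1_cost D n c)"

end

theory Submission imports Defs begin

lemma decomp_exists:
  fixes S :: "'a::real_inner set"
  assumes "finite S"
  shows "\<exists>y z. y \<in> span S \<and> (\<forall>w\<in>span S. inner z w = 0) \<and> x = y + z"
  using assms
proof (induction arbitrary: x rule: finite_induct)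
  case empty
  then show ?case by (rule_tac x=0 in exI, rule_tac x=x in exI) auto
next
  case (insert a S)
  obtain y z where y: "y \<in> span S" and z: "\<forall>w\<in>span S. inner z w = 0" and x: "x = y + z"
    using insert.IH by blast
  obtain ya za where ya: "ya \<in> span S" and za: "\<forall>w\<in>span S. inner za w = 0" and a: "a = ya + za"
    using insert.IH by blast
  define t where "t = inner z za / inner za za"
  define z' where "z' = z - t *\<^sub>R za"
  define y' where "y' = y + t *\<^sub>R za"
  have zaspan: "za \<in> span (insert a S)"
    using a ya by (metis add_diff_cancel_left' span_base span_diff insertI1 span_mono subset_insertI subsetD)
  have z'S: "\<forall>w\<in>span S. inner z' w = 0"
    using z za by (simp add: z'_def inner_diff_left)
  have "inner z' za = 0"
  proof (cases "za = 0")
    case True then show ?thesis by simp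
  next
    case False
    then have "inner za za \<noteq> 0" by simp
    then show ?thesis by (simp add: z'_def t_def inner_diff_left)
  qed
  then have z'a: "inner z' a = 0"
    using z'S ya by (simp add: a inner_add_right)
  have "\<forall>w\<in>span (insert a S). inner z' w = 0"
  proof
    fix w assume "w \<in> span (insert a S)"
    then obtain k v where "v \<in> span S" "w = v + k *\<^sub>R a"
      using span_insert[of a S] by (smt (verit) add_diff_cancel_left' diff_add_cancel mem_Collect_eq)
    then show "inner z' w = 0" using z'S z'a by (simp add: inner_add_right)
  qed
  moreover have "y' \<in> span (insert a S)"
    unfolding y'_def using y zaspan
    by (meson span_add span_mul span_mono subset_insertI subsetD)
  moreover have "x = y' + z'" by (simp add: x y'_def z'_def)
  ultimately show ?case by blast
qed

lemma proj_props:
  fixes S :: "'a::real_inner set"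
  assumes "finite S"
  shows "proj_onto (span S) x \<in> span S \<and> (\<forall>w\<in>span S. inner (x - proj_onto (span S) x) w = 0)"
proof -
  obtain y z where y: "y \<in> span S" and z: "\<forall>w\<in>span S. inner z w = 0" and x: "x = y + z"
    using decomp_exists[OF assms] by blast
  have P: "y \<in> span S \<and> (\<forall>w\<in>span S. inner (x - y) w = 0)" using y z x by simp
  have U: "y' = y" if "y' \<in> span S \<and> (\<forall>w\<in>span S. inner (x - y') w = 0)" for y'
  proof -
    have d: "y' - y \<in> span S" using that y by (simp add: span_diff)
    have "inner (x - y) (y' - y) - inner (x - y') (y' - y) = 0" using that P d by simp
    then have "inner (y' - y) (y' - y) = 0" by (simp add: inner_diff_left inner_diff_right algebra_simps)
    then show ?thesis by simp
  qed
  have "proj_onto (span S) x = y"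
    unfolding proj_onto_def using P U by (rule the_equality)
  then show ?thesis using P by simp
qed

lemma proj_best:
  fixes S :: "'a::real_inner set"
  assumes "finite S" "y \<in> span S"
  shows "(norm (x - proj_onto (span S) x))\<^sup>2 \<le> (norm (x - y))\<^sup>2"
proof -
  let ?p = "proj_onto (span S) x"
  have pr: "?p \<in> span S" "\<forall>w\<in>span S. inner (x - ?p) w = 0" using proj_props[OF assms(1)] by auto
  have "?p - y \<in> span S" using pr assms(2) by (simp add: span_diff)
  then have o: "orthogonal (x - ?p) (?p - y)" using pr by (simp add: orthogonal_def)
  have "(norm (x - y))\<^sup>2 = (norm ((x - ?p) + (?p - y)))\<^sup>2" by simp
  also have "\<dots> = (norm (x - ?p))\<^sup>2 + (norm (?p - y))\<^sup>2" using norm_add_Pythagorean[OF o] .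
  finally show ?thesis by simp
qed

lemma proj_res:
  fixes S :: "'a::real_inner set"
  assumes "finite S"
  shows "(norm (x - proj_onto (span S) x))\<^sup>2 = inner (x - proj_onto (span S) x) x"
proof -
  let ?p = "proj_onto (span S) x"
  have pr: "?p \<in> span S" "\<forall>w\<in>span S. inner (x - ?p) w = 0" using proj_props[OF assms(1)] by auto
  have "(norm (x - ?p))\<^sup>2 = inner (x - ?p) (x - ?p)" by (simp add: power2_norm_eq_inner)
  also have "\<dots> = inner (x - ?p) x - inner (x - ?p) ?p" by (simp add: inner_diff_right)
  finally show ?thesis using pr by simp
qed

lemma rate_lemma:
  fixes a :: "nat \<Rightarrow> real" and A :: real
  assumes "A > 0" "\<And>m. a m \<ge> 0" "a 0 \<le> A" "\<And>m. a (Suc m) \<le> a m - (a m)\<^sup>2 / A"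
  shows "a m \<le> A / (real m + 1)"
proof (induction m)
  case 0 then show ?case using assms by simp
next
  case (Suc m)
  let ?x = "a m"
  have x0: "?x \<ge> 0" using assms by simp
  have dec: "a (Suc m) \<le> ?x" using assms(4)[of m] assms(1) by (smt (verit) divide_nonneg_pos zero_le_power2)
  show ?case
  proof (cases "?x \<le> A / (real m + 2)")
    case True then show ?thesis using dec by (simp add: add.commute)
  next
    case False
    have eq: "?x - ?x\<^sup>2 / A = ?x * (1 - ?x / A)" using assms(1) by (simp add: field_simps power2_eq_square)
    have h1: "1 - ?x / A \<le> 1 - 1 / (real m + 2)"
      using False assms(1) by (simp add: field_simps)
    have h2: "0 \<le> 1 - ?x / A" using Suc.IH assms(1)
      by (simp add: field_simps) (smt (verit, best) divide_le_eq of_nat_0_le_iff mult_le_cancel_left1 )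
    have "?x * (1 - ?x / A) \<le> A / (real m + 1) * (1 - 1 / (real m + 2))"
      by (rule mult_mono) (use Suc.IH h1 h2 x0 in auto)
    also have "\<dots> = A / (real (Suc m) + 1)"
    proof -
      have "1 - 1 / (real m + 2) = (real m + 1) / (real m + 2)" by (simp add: field_simps)
      then show ?thesis by (simp add: add.commute)
    qed
    finally show ?thesis using assms(4)[of m] eq by simp
  qed
qed


lemma cancel_aux: "a \<noteq> 0 \<Longrightarrow> b \<noteq> 0 \<Longrightarrow> (x::real) * a * b / a * inverse b = x"
  by (simp add: field_simps)

theorem theorem1:
  fixes D :: "'a::{real_inner, complete_space} set"
    and \<phi> :: "nat \<Rightarrow> 'a" and n :: nat and \<kappa> :: real and \<omega> :: "nat \<Rightarrow> 'a"
  assumes "dictionary D"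
    and "\<forall>i<n. \<forall>j<n. inner (\<phi> i) (\<phi> j) = (if i = j then 1 else 0)"
    and "0 < \<kappa>" and "\<kappa> < 1"
    and "collective_omp D \<kappa> n \<phi> \<omega>"
    and "l1_dict_norm D n \<phi> < \<infinity>"
  shows "\<forall>m. omp_residual \<phi> n \<omega> m
           \<le> (real_of_ereal (l1_dict_norm D n \<phi>))\<^sup>2 / \<kappa>\<^sup>2 * inverse (real m + 1)"
proof -
  note kp = assms(3) assms(4)
  have Dn: "\<And>v. v \<in> D \<Longrightarrow> norm v = 1" using assms(1) unfolding dictionary_def by auto
  have omp: "\<And>k. k \<ge> 1 \<Longrightarrow> \<omega> k \<in> D \<and>
        (\<Sum>i<n. (inner (\<phi> i - proj_onto (omp_space \<omega> (k - 1)) (\<phi> i)) (\<omega> k))\<^sup>2)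
        \<ge> \<kappa>\<^sup>2 * (SUP v\<in>D. (\<Sum>i<n. (inner (\<phi> i - proj_onto (omp_space \<omega> (k - 1)) (\<phi> i)) v)\<^sup>2))"
    using assms(5) unfolding collective_omp_def by blast
  define rr where "rr m i = \<phi> i - proj_onto (omp_space \<omega> m) (\<phi> i)" for m i
  define R where "R m = omp_residual \<phi> n \<omega> m" for m
  define f where "f m v = (\<Sum>i<n. (inner (rr m i) v)\<^sup>2)" for m v
  define S where "S m = (SUP v\<in>D. f m v)" for m
  have Rdef: "R m = (\<Sum>i<n. (norm (rr m i))\<^sup>2)" for m
    by (simp add: R_def rr_def omp_residual_def)
  have fin: "finite (\<omega> ` {1..m})" for m by simp
  have Wsp: "omp_space \<omega> m = span (\<omega> ` {1..m})" for m by (simp add: omp_space_def)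
  have R0: "R m \<ge> 0" for m unfolding Rdef by (simp add: sum_nonneg)
  have D1: "\<omega> 1 \<in> D" using omp[of 1] by simp
  have fb: "f m v \<le> R m" if "v \<in> D" for m v
    unfolding f_def Rdef
  proof (rule sum_mono)
    fix i
    have "(inner (rr m i) v)\<^sup>2 \<le> inner (rr m i) (rr m i) * inner v v" by (rule Cauchy_Schwarz_ineq)
    also have "\<dots> = (norm (rr m i))\<^sup>2" using Dn[OF that] by (simp add: power2_norm_eq_inner[symmetric])
    finally show "(inner (rr m i) v)\<^sup>2 \<le> (norm (rr m i))\<^sup>2" .
  qed
  have bdd: "bdd_above (f m ` D)" for m using fb by (meson bdd_aboveI2)
  have fS: "f m v \<le> S m" if "v \<in> D" for m v unfolding S_def using that bdd by (rule cSUP_upper)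
  have SR: "S m \<le> R m" for m unfolding S_def using D1 fb by (intro cSUP_least) auto
  have f0: "f m v \<ge> 0" for m v unfolding f_def by (simp add: sum_nonneg)
  have S0: "S m \<ge> 0" for m using fS[OF D1, of m] f0[of m "\<omega> 1"] by linarith
  have step: "R (Suc m) \<le> R m - \<kappa>\<^sup>2 * S m" for m
  proof -
    let ?w = "\<omega> (Suc m)"
    have wD: "?w \<in> D" and cond: "f m ?w \<ge> \<kappa>\<^sup>2 * S m"
      using omp[of "Suc m"] by (simp_all add: f_def S_def rr_def)
    have nw: "inner ?w ?w = 1" using Dn[OF wD] by (simp add: power2_norm_eq_inner[symmetric])
    have per: "(norm (rr (Suc m) i))\<^sup>2 \<le> (norm (rr m i))\<^sup>2 - (inner (rr m i) ?w)\<^sup>2" for i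
    proof -
      let ?t = "inner (rr m i) ?w"
      let ?y = "proj_onto (omp_space \<omega> m) (\<phi> i) + ?t *\<^sub>R ?w"
      have sub: "span (\<omega> ` {1..m}) \<subseteq> span (\<omega> ` {1..Suc m})" by (rule span_mono) auto
      have "proj_onto (omp_space \<omega> m) (\<phi> i) \<in> span (\<omega> ` {1..Suc m})"
        using proj_props[OF fin[of m], of "\<phi> i"] sub by (auto simp: Wsp)
      moreover have "?w \<in> span (\<omega> ` {1..Suc m})" by (rule span_base) auto
      ultimately have y: "?y \<in> span (\<omega> ` {1..Suc m})" by (simp add: span_add span_mul)
      have "(norm (rr (Suc m) i))\<^sup>2 \<le> (norm (\<phi> i - ?y))\<^sup>2"
        using proj_best[OF fin y, of "\<phi> i"] by (simp add: rr_def Wsp)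
      also have "\<phi> i - ?y = rr m i - ?t *\<^sub>R ?w" by (simp add: rr_def)
      also have "(norm (rr m i - ?t *\<^sub>R ?w))\<^sup>2 = (norm (rr m i))\<^sup>2 - ?t\<^sup>2"
      proof -
        have "(norm (rr m i - ?t *\<^sub>R ?w))\<^sup>2 = inner (rr m i - ?t *\<^sub>R ?w) (rr m i - ?t *\<^sub>R ?w)"
          by (simp add: power2_norm_eq_inner)
        also have "\<dots> = inner (rr m i) (rr m i) - ?t\<^sup>2"
          by (simp add: inner_diff_left inner_diff_right nw inner_commute power2_eq_square)
        finally show ?thesis by (simp add: power2_norm_eq_inner)
      qed
      finally show ?thesis .
    qed
    have "R (Suc m) \<le> (\<Sum>i<n. (norm (rr m i))\<^sup>2 - (inner (rr m i) ?w)\<^sup>2)"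
      unfolding Rdef by (rule sum_mono) (rule per)
    also have "\<dots> = R m - f m ?w" by (simp add: Rdef f_def sum_subtractf)
    finally show ?thesis using cond by linarith
  qed
  have key: "R m \<le> C * sqrt (S m)" if rep: "l1_rep D n \<phi> c" and cost: "l1_cost D n c = ereal C" for c C m
  proof -
    have hs: "((\<lambda>w. c w i *\<^sub>R w) has_sum \<phi> i) D" if "i < n" for i
      using rep that unfolding l1_rep_def by blast
    have hs2: "((\<lambda>w. c w i * inner (rr m i) w) has_sum inner (rr m i) (\<phi> i)) D" if "i < n" for i
      using has_sum_bounded_linear[OF bounded_linear_inner_right hs[OF that], of "rr m i"]
      by simp
    have lim: "((\<lambda>F. \<Sum>i<n. sum (\<lambda>w. c w i * inner (rr m i) w) F) \<longlongrightarrow> (\<Sum>i<n. inner (rr m i) (\<phi> i))) (finite_subsets_at_top D)"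
      by (rule tendsto_sum) (use hs2 in \<open>auto simp: has_sum_def\<close>)
    have Req: "R m = (\<Sum>i<n. inner (rr m i) (\<phi> i))"
      unfolding Rdef rr_def Wsp by (rule sum.cong[OF refl], rule proj_res[OF fin])
    have bnd: "(\<Sum>i<n. sum (\<lambda>w. c w i * inner (rr m i) w) F) \<le> C * sqrt (S m)"
      if F: "finite F" "F \<subseteq> D" for F
    proof -
      have "(\<Sum>i<n. sum (\<lambda>w. c w i * inner (rr m i) w) F) = (\<Sum>w\<in>F. \<Sum>i<n. c w i * inner (rr m i) w)"
        by (rule sum.swap)
      also have "\<dots> \<le> (\<Sum>w\<in>F. sqrt (\<Sum>i<n. (c w i)\<^sup>2) * sqrt (S m))"
      proof (rule sum_mono)
        fix w assume wF: "w \<in> F"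
        have "(\<Sum>i<n. c w i * inner (rr m i) w) \<le> (\<Sum>i<n. \<bar>c w i\<bar> * \<bar>inner (rr m i) w\<bar>)"
          by (rule sum_mono) (metis abs_ge_self abs_mult)
        also have "\<dots> \<le> L2_set (\<lambda>i. c w i) {..<n} * L2_set (\<lambda>i. inner (rr m i) w) {..<n}"
          by (rule L2_set_mult_ineq)
        also have "L2_set (\<lambda>i. inner (rr m i) w) {..<n} = sqrt (f m w)"
          by (simp add: L2_set_def f_def)
        also have "L2_set (\<lambda>i. c w i) {..<n} * sqrt (f m w) \<le> sqrt (\<Sum>i<n. (c w i)\<^sup>2) * sqrt (S m)"
          using fS[of w m] wF F by (auto simp: L2_set_def sum_nonneg intro!: mult_left_mono)
        finally show "(\<Sum>i<n. c w i * inner (rr m i) w) \<le> sqrt (\<Sum>i<n. (c w i)\<^sup>2) * sqrt (S m)" .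
      qed
      also have "\<dots> = (\<Sum>w\<in>F. sqrt (\<Sum>i<n. (c w i)\<^sup>2)) * sqrt (S m)"
        by (simp add: sum_distrib_right)
      also have "\<dots> \<le> C * sqrt (S m)"
      proof (rule mult_right_mono)
        have "ereal (\<Sum>w\<in>F. sqrt (\<Sum>i<n. (c w i)\<^sup>2)) \<le> l1_cost D n c"
          unfolding l1_cost_def by (rule SUP_upper) (use F in auto)
        then show "(\<Sum>w\<in>F. sqrt (\<Sum>i<n. (c w i)\<^sup>2)) \<le> C" using cost by simp
      qed (simp add: S0)
      finally show ?thesis .
    qed
    show ?thesis unfolding Req
      by (rule tendsto_upperbound[OF lim])
        (auto intro!: eventually_finite_subsets_at_top_weakI bnd)
  qed
  have rate: "R m \<le> C\<^sup>2 / \<kappa>\<^sup>2 * inverse (real m + 1)"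
    if rep: "l1_rep D n \<phi> c" and cost: "l1_cost D n c = ereal C" and C0: "C \<ge> 0" for c C m
  proof (cases "C = 0")
    case True
    then have "R m \<le> 0" using key[OF rep cost, of m] by simp
    then show ?thesis using True by simp
  next
    case False
    then have Cp: "C > 0" using C0 by simp
    define A where "A = C\<^sup>2 / \<kappa>\<^sup>2"
    have Ap: "A > 0" using Cp kp by (simp add: A_def)
    have sq: "(R k)\<^sup>2 \<le> C\<^sup>2 * S k" for k
    proof -
      have "(R k)\<^sup>2 \<le> (C * sqrt (S k))\<^sup>2"
        using key[OF rep cost, of k] R0[of k] by (simp add: power_mono)
      also have "\<dots> = C\<^sup>2 * S k" using S0[of k] by (simp add: power_mult_distrib)
      finally show ?thesis .
    qed
    have a0: "R 0 \<le> A"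
    proof -
      have "C\<^sup>2 * S 0 \<le> C\<^sup>2 * R 0" using SR[of 0] by (simp add: mult_left_mono)
      then have "R 0 * R 0 \<le> C\<^sup>2 * R 0" using sq[of 0] by (simp add: power2_eq_square)
      then have "R 0 \<le> C\<^sup>2" using R0[of 0]
        by (cases "R 0 = 0") (auto intro: mult_right_le_imp_le)
      also have "C\<^sup>2 \<le> A"
      proof -
        have "\<kappa>\<^sup>2 \<le> 1" using kp by (simp add: power_le_one)
        then have "C\<^sup>2 * \<kappa>\<^sup>2 \<le> C\<^sup>2" by (simp add: mult_left_le)
        then show ?thesis unfolding A_def using kp by (simp add: field_simps)
      qed
      finally show ?thesis .
    qed
    have st: "R (Suc k) \<le> R k - (R k)\<^sup>2 / A" for k
    proof -
      have "(R k)\<^sup>2 / A = \<kappa>\<^sup>2 * ((R k)\<^sup>2 / C\<^sup>2)" using Cp kp by (simp add: A_def field_simps)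
      also have "\<dots> \<le> \<kappa>\<^sup>2 * S k"
        using sq[of k] Cp by (intro mult_left_mono) (simp_all add: field_simps)
      finally show ?thesis using step[of k] by linarith
    qed
    have "R m \<le> A / (real m + 1)" by (rule rate_lemma[OF Ap R0 a0 st])
    then show ?thesis by (simp add: A_def divide_inverse)
  qed
  show ?thesis
  proof
    fix m
    let ?J = "l1_dict_norm D n \<phi>"
    have cost0: "l1_cost D n c \<ge> 0" for c
    proof -
      have "ereal (\<Sum>w\<in>{}. sqrt (\<Sum>i<n. (c w i)\<^sup>2)) \<le> l1_cost D n c"
        unfolding l1_cost_def by (rule SUP_upper) auto
      then show ?thesis by (simp add: zero_ereal_def)
    qed
    have J0: "?J \<ge> 0" unfolding l1_dict_norm_def by (rule INF_greatest) (rule cost0)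
    obtain j where jJ: "?J = ereal j" using J0 assms(6) by (cases ?J) auto
    have j0: "j \<ge> 0" using J0 jJ by simp
    show "omp_residual \<phi> n \<omega> m \<le> (real_of_ereal ?J)\<^sup>2 / \<kappa>\<^sup>2 * inverse (real m + 1)"
    proof (rule ccontr)
      assume "\<not> ?thesis"
      then have gt: "R m > j\<^sup>2 / \<kappa>\<^sup>2 * inverse (real m + 1)" by (simp add: R_def jJ)
      define B where "B = sqrt (R m * \<kappa>\<^sup>2 * (real m + 1))"
      have pos: "\<kappa>\<^sup>2 * (real m + 1) > 0" using kp by simp
      have "j\<^sup>2 / (\<kappa>\<^sup>2 * (real m + 1)) < R m" using gt by (simp add: divide_inverse mult.assoc)
      then have "j\<^sup>2 < R m * (\<kappa>\<^sup>2 * (real m + 1))" using pos by (simp add: divide_less_eq)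
      then have "j\<^sup>2 < R m * \<kappa>\<^sup>2 * (real m + 1)" by (simp add: mult.assoc)
      then have jB: "j < B" unfolding B_def using j0 by (metis real_less_rsqrt)
      then have "?J < ereal B" using jJ by simp
      then obtain c where rep: "l1_rep D n \<phi> c" and cB: "l1_cost D n c < ereal B"
        unfolding l1_dict_norm_def by (auto simp: INF_less_iff)
      obtain C where cC: "l1_cost D n c = ereal C" using cost0[of c] cB by (cases "l1_cost D n c") auto
      have C0: "C \<ge> 0" using cost0[of c] cC by simp
      have CB: "C < B" using cB cC by simp
      have "R m \<le> C\<^sup>2 / \<kappa>\<^sup>2 * inverse (real m + 1)" by (rule rate[OF rep cC C0])
      also have "\<dots> < B\<^sup>2 / \<kappa>\<^sup>2 * inverse (real m + 1)"
        using CB C0 kp by (intro mult_strict_right_mono divide_strict_right_mono power_strict_mono) auto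
      also have "B\<^sup>2 = R m * \<kappa>\<^sup>2 * (real m + 1)" unfolding B_def using R0[of m]
        by (simp add: real_sqrt_pow2)
      also have "R m * \<kappa>\<^sup>2 * (real m + 1) / \<kappa>\<^sup>2 * inverse (real m + 1) = R m"
      proof -
        have "\<kappa>\<^sup>2 \<noteq> 0" "real m + 1 \<noteq> 0" using kp by auto
        then show ?thesis by (rule cancel_aux)
      qed
      finally show False by simp
    qed
  qed
qed

end
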